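(* For sufficiently large $n$, $$R(\mathcal{J},Q_n)\le R(\mathcal{SD}_{1,2},Q_n)\le n+\frac{(2+o(1))\,n}{\log n}.$$
   Context: A copy of a poset $P$ in a poset $P_1$ is an induced subposet of $P_1$ isomorphic to $P$. $Q_n$ is the Boolean lattice of all subsets of an $n$-element set ordered by inclusion. $R(P_1,P_2)$ is the smallest $N$ such that every blue/red coloring of the elements of $Q_N$ contains an all-blue copy of $P_1$ or an all-red copy of $P_2$. The poset $\mathcal{J}$ has four distinct elements $A,B,C,D$ with $B\le C\le D$, $B\le A$, $A$ incomparable to $C$, and $A$ incomparable to $D$ (and no other relations besides those implied). $\mathcal{SD}_{s,t}$ is the poset obtained from two disjoint, mutually element-wise incomparable chains of lengths $s$ and $t$ by adding a common minimum element and a common maximum element. $\log$ is base $2$; $o(1)\to0$ as $n\to\infty$. *)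

theory Defs
  imports Complex_Main
begin

definition has_copy :: "'a set \<Rightarrow> ('a \<Rightarrow> 'a \<Rightarrow> bool) \<Rightarrow> nat set set \<Rightarrow> bool" where
  "has_copy X le S \<longleftrightarrow>
     (\<exists>f. inj_on f X \<and> f ` X \<subseteq> S \<and> (\<forall>x\<in>X. \<forall>y\<in>X. le x y \<longleftrightarrow> f x \<subseteq> f y))"

definition Q :: "nat \<Rightarrow> nat set set" where
  "Q N = Pow {..<N}"

text \<open>Every blue/red colouring of Q_N (True = blue) contains a blue copy of P1 or a red copy of P2.\<close>
definition ramsey_prop ::
  "'a set \<Rightarrow> ('a \<Rightarrow> 'a \<Rightarrow> bool) \<Rightarrow> 'b set \<Rightarrow> ('b \<Rightarrow> 'b \<Rightarrow> bool) \<Rightarrow> nat \<Rightarrow> bool" where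
  "ramsey_prop X1 le1 X2 le2 N \<longleftrightarrow>
     (\<forall>c :: nat set \<Rightarrow> bool.
        has_copy X1 le1 {A \<in> Q N. c A} \<or> has_copy X2 le2 {A \<in> Q N. \<not> c A})"

definition poset_ramsey ::
  "'a set \<Rightarrow> ('a \<Rightarrow> 'a \<Rightarrow> bool) \<Rightarrow> 'b set \<Rightarrow> ('b \<Rightarrow> 'b \<Rightarrow> bool) \<Rightarrow> nat" where
  "poset_ramsey X1 le1 X2 le2 = (LEAST N. ramsey_prop X1 le1 X2 le2 N)"

text \<open>The poset J on {0,1,2,3}, with A = 0, B = 1, C = 2, D = 3:
  B \<le> C \<le> D, B \<le> A, plus reflexivity and transitivity.\<close>
definition J_carrier :: "nat set" where
  "J_carrier = {0, 1, 2, 3}"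

definition J_le :: "nat \<Rightarrow> nat \<Rightarrow> bool" where
  "J_le x y \<longleftrightarrow> x = y \<or> (x = 1 \<and> y \<in> {0, 2, 3}) \<or> (x = 2 \<and> y = 3)"

text \<open>SD_{s,t}: two disjoint mutually incomparable chains with s and t elements,
  plus a common minimum and a common maximum.\<close>
datatype sd_elem = SBot | STop | SL nat | SR nat

definition SD_carrier :: "nat \<Rightarrow> nat \<Rightarrow> sd_elem set" where
  "SD_carrier s t = {SBot, STop} \<union> SL ` {..<s} \<union> SR ` {..<t}"

fun SD_le :: "sd_elem \<Rightarrow> sd_elem \<Rightarrow> bool" where
  "SD_le SBot y = True"
| "SD_le x STop = True"
| "SD_le (SL i) (SL j) = (i \<le> j)"
| "SD_le (SR i) (SR j) = (i \<le> j)"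
| "SD_le _ _ = False"

end

theory Submission
  imports Defs "HOL-Combinatorics.Multiset_Permutations" "HOL-Real_Asymp.Real_Asymp"
begin


lemma nth_in_take_iff:
  assumes "distinct xs" "i < length xs"
  shows "xs!i \<in> set (take m xs) \<longleftrightarrow> i < m"
proof
  assume "xs!i \<in> set (take m xs)"
  then obtain l where l: "l < length (take m xs)" "take m xs ! l = xs ! i"
    by (auto simp: in_set_conv_nth)
  then have "xs ! l = xs ! i" "l < length xs" "l < m" by auto
  with assms nth_eq_iff_index_eq show "i < m" by metis
next
  assume "i < m"
  then show "xs!i \<in> set (take m xs)" using assms
    by (metis in_set_conv_nth length_take min_less_iff_conj nth_take)
qed

definition Yp :: "nat \<Rightarrow> nat list \<Rightarrow> nat \<Rightarrow> nat set" where
  "Yp n \<pi> i = (\<lambda>y. n + y) ` set (take i \<pi>)"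

lemma Yp_mono: "i \<le> i' \<Longrightarrow> Yp n \<pi> i \<subseteq> Yp n \<pi> i'"
  unfolding Yp_def using set_take_subset_set_take by (metis image_mono)

lemma Yp_disj: "Yp n \<pi> i \<inter> {..<n} = {}"
  unfolding Yp_def by auto

lemma Yp_sub: "\<pi> \<in> permutations_of_set {..<k} \<Longrightarrow> Yp n \<pi> i \<subseteq> {..<n+k}"
  unfolding Yp_def using set_take_subset permutations_of_setD(1) by fastforce

lemma Yp_0[simp]: "Yp n \<pi> 0 = {}" unfolding Yp_def by simp

lemma split_XY:
  assumes "S \<subseteq> {..<n}" "S' \<subseteq> {..<n}"
  shows "S \<union> Yp n \<pi> i \<subseteq> S' \<union> Yp n \<pi>' i' \<longleftrightarrow> S \<subseteq> S' \<and> Yp n \<pi> i \<subseteq> Yp n \<pi>' i'"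
  using assms Yp_disj[of n \<pi> i] Yp_disj[of n \<pi>' i'] by blast

definition G :: "(nat set \<Rightarrow> bool) \<Rightarrow> nat \<Rightarrow> nat list \<Rightarrow> nat set \<Rightarrow> nat \<Rightarrow> bool" where
  "G c n \<pi> S i \<longleftrightarrow> (\<exists>T. (\<forall>l<i. T l \<subseteq> T (Suc l)) \<and> (\<forall>l\<le>i. T l \<subseteq> S \<and> c (T l \<union> Yp n \<pi> l)))"

lemma G_mono: "G c n \<pi> S i \<Longrightarrow> S \<subseteq> S' \<Longrightarrow> G c n \<pi> S' i"
  unfolding G_def by (meson order_trans)

lemma G_step:
  assumes "G c n \<pi> S m" "c (S \<union> Yp n \<pi> (Suc m))"
  shows "G c n \<pi> S (Suc m)"
proof -
  obtain T where T: "\<forall>l<m. T l \<subseteq> T (Suc l)" "\<forall>l\<le>m. T l \<subseteq> S \<and> c (T l \<union> Yp n \<pi> l)"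
    using assms(1) unfolding G_def by blast
  define T' where "T' = T(Suc m := S)"
  have "\<forall>l<Suc m. T' l \<subseteq> T' (Suc l)"
    using T by (auto simp: T'_def less_Suc_eq)
  moreover have "\<forall>l\<le>Suc m. T' l \<subseteq> S \<and> c (T' l \<union> Yp n \<pi> l)"
    using T assms(2) by (auto simp: T'_def le_Suc_eq)
  ultimately show ?thesis unfolding G_def by blast
qed

lemma G_0: "c S \<Longrightarrow> G c n \<pi> S 0"
  unfolding G_def by (rule exI[of _ "\<lambda>_. S"]) auto

lemma chain_lemma:
  assumes nocopy: "\<not> has_copy (Q n) (\<subseteq>) {A \<in> Q (n+k). \<not> c A}"
    and pi: "\<pi> \<in> permutations_of_set {..<k}"
  shows "G c n \<pi> {..<n} k"
proof (rule ccontr)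
  assume nG: "\<not> G c n \<pi> {..<n} k"
  have nGS: "\<not> G c n \<pi> S k" if "S \<subseteq> {..<n}" for S
    using nG G_mono that by blast
  define h where "h S = (LEAST i. \<not> G c n \<pi> S i)" for S
  define f where "f S = S \<union> Yp n \<pi> (h S)" for S
  have hk: "h S \<le> k \<and> \<not> G c n \<pi> S (h S)" if "S \<subseteq> {..<n}" for S
    using nGS[OF that] unfolding h_def by (metis LeastI Least_le)
  have hmono: "h S \<le> h S'" if "S \<subseteq> S'" "S' \<subseteq> {..<n}" for S S'
  proof -
    have "\<not> G c n \<pi> S (h S')" using hk[OF that(2)] G_mono that(1) by blast
    then show ?thesis unfolding h_def by (rule Least_le)
  qed
  have red: "\<not> c (f S)" if "S \<subseteq> {..<n}" for S
  proof (cases "h S")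
    case 0
    then show ?thesis using hk[OF that] G_0 unfolding f_def by force
  next
    case (Suc m)
    have "G c n \<pi> S m" using Suc unfolding h_def
      by (metis lessI not_less_Least)
    then show ?thesis using hk[OF that] G_step Suc unfolding f_def by metis
  qed
  have iff: "S \<subseteq> S' \<longleftrightarrow> f S \<subseteq> f S'" if "S \<subseteq> {..<n}" "S' \<subseteq> {..<n}" for S S'
  proof
    assume "S \<subseteq> S'"
    then show "f S \<subseteq> f S'" unfolding f_def
      using Yp_mono[OF hmono[OF \<open>S \<subseteq> S'\<close> that(2)], of n \<pi>] by blast
  next
    assume "f S \<subseteq> f S'"
    then show "S \<subseteq> S'" unfolding f_def using split_XY[OF that] by blast
  qed
  have "has_copy (Q n) (\<subseteq>) {A \<in> Q (n+k). \<not> c A}"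
    unfolding has_copy_def
  proof (intro exI conjI)
    show "inj_on f (Q n)" unfolding inj_on_def Q_def using iff
      by (metis PowD subset_antisym subset_refl)
    show "f ` Q n \<subseteq> {A \<in> Q (n+k). \<not> c A}"
      using red Yp_sub[OF pi, of n] unfolding Q_def f_def by fastforce
    show "\<forall>x\<in>Q n. \<forall>y\<in>Q n. x \<subseteq> y \<longleftrightarrow> f x \<subseteq> f y" using iff unfolding Q_def by blast
  qed
  with nocopy show False by blast
qed


lemma chain_le:
  assumes "\<forall>l<k. T l \<subseteq> T (Suc l)" "l \<le> l'" "l' \<le> k"
  shows "T l \<subseteq> T l'"
  using assms(2,3)
proof (induction l')
  case 0 then show ?case by simp
next
  case (Suc m)
  show ?case
  proof (cases "l = Suc m")
    case False
    then have "T l \<subseteq> T m" using Suc by simp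
    also have "T m \<subseteq> T (Suc m)" using assms(1) Suc by simp
    finally show ?thesis .
  qed simp
qed

lemma memZ: "S \<subseteq> {..<n} \<Longrightarrow> (n + x \<in> S \<union> Yp n \<pi> i) = (x \<in> set (take i \<pi>))"
  unfolding Yp_def by auto

lemma Yp_all: "\<pi> \<in> permutations_of_set {..<k} \<Longrightarrow> Yp n \<pi> k = (\<lambda>y. n+y) ` {..<k}"
  unfolding Yp_def using permutations_of_setD(1) length_finite_permutations_of_set
  by (metis card_lessThan take_all_iff order_refl)

lemma sd_core:
  assumes pi: "\<pi> \<in> permutations_of_set {..<k}" and sg: "\<sigma> \<in> permutations_of_set {..<k}"
    and tk: "take j \<pi> = take j \<sigma>" and p: "\<sigma>!j = \<pi>!p" "j+2 \<le> p" "p < k"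
    and T: "\<forall>l<k. T l \<subseteq> T (Suc l)" "\<forall>l\<le>k. T l \<subseteq> {..<n} \<and> c (T l \<union> Yp n \<pi> l)"
    and T': "\<forall>l<k. T' l \<subseteq> T' (Suc l)" "\<forall>l\<le>k. T' l \<subseteq> {..<n} \<and> c (T' l \<union> Yp n \<sigma> l)"
    and e0: "T' 0 = T 0" and ek: "T' k = T k"
  shows "has_copy (SD_carrier 1 2) SD_le {A \<in> Q (n+k). c A}"
proof -
  have lp: "length \<pi> = k" and ls: "length \<sigma> = k"
    using length_finite_permutations_of_set[OF pi] length_finite_permutations_of_set[OF sg] by auto
  have dp: "distinct \<pi>" and ds: "distinct \<sigma>" using pi sg permutations_of_setD by auto
  define B where "B = T 0 \<union> Yp n \<pi> 0"
  define L where "L = T' (j+1) \<union> Yp n \<sigma> (j+1)"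
  define R0 where "R0 = T (j+1) \<union> Yp n \<pi> (j+1)"
  define R1 where "R1 = T (j+2) \<union> Yp n \<pi> (j+2)"
  define Tp where "Tp = T k \<union> Yp n \<pi> k"
  have jk: "j + 2 < k" using p by simp
  have sub: "T l \<subseteq> T l'" if "l \<le> l'" "l' \<le> k" for l l' using chain_le[OF T(1) that] .
  have sub': "T' l \<subseteq> T' l'" if "l \<le> l'" "l' \<le> k" for l l' using chain_le[OF T'(1) that] .
  have X: "T l \<subseteq> {..<n}" "T' l \<subseteq> {..<n}" if "l \<le> k" for l using T(2) T'(2) that by auto
  have takeS: "set (take (j+1) \<sigma>) = set (take j \<pi>) \<union> {\<pi>!p}"
    using tk p(1) ls jk by (simp add: take_Suc_conv_app_nth)
  have mB: "\<not> n + x \<in> B" for x using memZ[OF X(1)[of 0], of x \<pi> 0] unfolding B_def by simp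
  have uL: "n + \<pi>!p \<in> L" unfolding L_def using memZ[OF X(2)[of "j+1"]] takeS jk by simp
  have uR1: "n + \<pi>!p \<notin> R1" unfolding R1_def using memZ[OF X(1)[of "j+2"]] nth_in_take_iff[OF dp] lp p jk by simp
  have uR0: "n + \<pi>!p \<notin> R0" unfolding R0_def using memZ[OF X(1)[of "j+1"]] nth_in_take_iff[OF dp] lp p jk by simp
  have vR0: "n + \<pi>!j \<in> R0" unfolding R0_def using memZ[OF X(1)[of "j+1"]] nth_in_take_iff[OF dp] lp jk by simp
  have vL: "n + \<pi>!j \<notin> L"
  proof -
    have "\<pi>!j \<notin> set (take j \<pi>)" using nth_in_take_iff[OF dp] lp jk by simp
    moreover have "\<pi>!j \<noteq> \<pi>!p" using dp lp p jk nth_eq_iff_index_eq by fastforce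
    ultimately show ?thesis unfolding L_def using memZ[OF X(2)[of "j+1"]] takeS jk by simp
  qed
  have wR1: "n + \<pi>!(j+1) \<in> R1" unfolding R1_def using memZ[OF X(1)[of "j+2"]] nth_in_take_iff[OF dp] lp jk by simp
  have wR0: "n + \<pi>!(j+1) \<notin> R0" unfolding R0_def using memZ[OF X(1)[of "j+1"]] nth_in_take_iff[OF dp] lp jk by simp
  have zTp: "n + \<pi>!(j+2) \<in> Tp" unfolding Tp_def using memZ[OF X(1)[of "k"]] nth_in_take_iff[OF dp] lp jk by simp
  have zR1: "n + \<pi>!(j+2) \<notin> R1" unfolding R1_def using memZ[OF X(1)[of "j+2"]] nth_in_take_iff[OF dp] lp jk by simp
  have BL: "B \<subseteq> L" unfolding B_def L_def using sub'[of 0 "j+1"] e0 jk by auto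
  have BR0: "B \<subseteq> R0" unfolding B_def R0_def using sub[of 0 "j+1"] jk by auto
  have R0R1: "R0 \<subseteq> R1" unfolding R0_def R1_def using sub[of "j+1" "j+2"] jk Yp_mono[of "j+1" "j+2"] by auto
  have R1Tp: "R1 \<subseteq> Tp" unfolding R1_def Tp_def using sub[of "j+2" k] jk Yp_mono[of "j+2" k] by auto
  have LTp: "L \<subseteq> Tp"
  proof -
    have "T' (j+1) \<subseteq> T k" using sub'[of "j+1" k] ek jk by auto
    moreover have "Yp n \<sigma> (j+1) \<subseteq> Yp n \<pi> k"
      using Yp_mono[of "j+1" k n \<sigma>] Yp_all[OF pi] Yp_all[OF sg] jk by auto
    ultimately show ?thesis unfolding L_def Tp_def by auto
  qed
  have BR1: "B \<subseteq> R1" "B \<subseteq> Tp" "R0 \<subseteq> Tp" using BR0 R0R1 R1Tp by auto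
  have nc: "\<not> L \<subseteq> B" "\<not> R0 \<subseteq> B" "\<not> R1 \<subseteq> B" "\<not> Tp \<subseteq> B"
    "\<not> L \<subseteq> R0" "\<not> L \<subseteq> R1" "\<not> R0 \<subseteq> L" "\<not> R1 \<subseteq> L" "\<not> R1 \<subseteq> R0"
    "\<not> Tp \<subseteq> L" "\<not> Tp \<subseteq> R0" "\<not> Tp \<subseteq> R1"
    using mB uL uR1 uR0 vR0 vL wR1 wR0 zTp zR1 R0R1 R1Tp BR1 LTp by blast+
  have Zs: "T l \<union> Yp n \<pi> l \<in> Q (n+k)" "T' l \<union> Yp n \<sigma> l \<in> Q (n+k)" if "l \<le> k" for l
    using X[OF that] Yp_sub[OF pi, of n l] Yp_sub[OF sg, of n l] unfolding Q_def by fastforce+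
  have inQ: "A \<in> Q (n+k)" if "A \<in> {B, L, R0, R1, Tp}" for A
    using that jk Zs[of 0] Zs[of "j+1"] Zs[of "j+2"] Zs[of k]
    unfolding B_def L_def R0_def R1_def Tp_def by auto
  have blue: "c A" if "A \<in> {B, L, R0, R1, Tp}" for A
    using that T(2) T'(2) jk unfolding B_def L_def R0_def R1_def Tp_def by auto
  define f where "f x = (case x of SBot \<Rightarrow> B | STop \<Rightarrow> Tp | SL i \<Rightarrow> L | SR i \<Rightarrow> (if i = 0 then R0 else R1))" for x
  have car: "SD_carrier 1 2 = {SBot, STop, SL 0, SR 0, SR 1}"
    unfolding SD_carrier_def by (auto simp: lessThan_Suc)
  show ?thesis unfolding has_copy_def
  proof (intro exI[of _ f] conjI)
    show "\<forall>x\<in>SD_carrier 1 2. \<forall>y\<in>SD_carrier 1 2. SD_le x y = (f x \<subseteq> f y)"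
      unfolding car f_def using BL BR0 R0R1 R1Tp LTp BR1 nc by auto
    then show "inj_on f (SD_carrier 1 2)" unfolding car inj_on_def f_def
      using nc by auto
    show "f ` SD_carrier 1 2 \<subseteq> {A \<in> Q (n + k). c A}"
      unfolding car f_def using inQ blue by auto
  qed
qed


definition desc :: "nat \<Rightarrow> nat list \<Rightarrow> nat set" where
  "desc k \<pi> = {i. Suc i < k \<and> \<pi>!i < \<pi>!(Suc i)}"

lemma sd_two:
  assumes pi: "\<pi> \<in> permutations_of_set {..<k}" and sg: "\<sigma> \<in> permutations_of_set {..<k}"
    and ne: "\<pi> \<noteq> \<sigma>" and dd: "desc k \<pi> = desc k \<sigma>"
    and T: "\<forall>l<k. T l \<subseteq> T (Suc l)" "\<forall>l\<le>k. T l \<subseteq> {..<n} \<and> c (T l \<union> Yp n \<pi> l)"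
    and T': "\<forall>l<k. T' l \<subseteq> T' (Suc l)" "\<forall>l\<le>k. T' l \<subseteq> {..<n} \<and> c (T' l \<union> Yp n \<sigma> l)"
    and e0: "T' 0 = T 0" and ek: "T' k = T k"
  shows "has_copy (SD_carrier 1 2) SD_le {A \<in> Q (n+k). c A}"
proof -
  have lp: "length \<pi> = k" and ls: "length \<sigma> = k"
    using length_finite_permutations_of_set[OF pi] length_finite_permutations_of_set[OF sg] by auto
  have dp: "distinct \<pi>" and ds: "distinct \<sigma>" using pi sg permutations_of_setD by auto
  have sp: "set \<pi> = {..<k}" and ss: "set \<sigma> = {..<k}" using pi sg permutations_of_setD by auto
  have ex: "\<exists>i. i < k \<and> \<pi>!i \<noteq> \<sigma>!i"
    using ne lp ls nth_equalityI by metis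
  define j where "j = (LEAST i. i < k \<and> \<pi>!i \<noteq> \<sigma>!i)"
  have j: "j < k" "\<pi>!j \<noteq> \<sigma>!j" using LeastI_ex[OF ex] unfolding j_def by auto
  have before: "\<pi>!i = \<sigma>!i" if "i < j" for i
    using not_less_Least[of i "\<lambda>i. i < k \<and> \<pi>!i \<noteq> \<sigma>!i"] that j(1) unfolding j_def by auto
  have tk: "take j \<pi> = take j \<sigma>"
    by (rule nth_equalityI) (use lp ls j before in auto)
  obtain p where p: "p < k" "\<pi>!p = \<sigma>!j"
    using ss sp j(1) ls by (metis in_set_conv_nth lessThan_iff lp nth_mem)
  obtain q where q: "q < k" "\<sigma>!q = \<pi>!j"
    using ss sp j(1) lp by (metis in_set_conv_nth lessThan_iff ls nth_mem)
  have pj: "j < p"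
  proof -
    have "p \<noteq> j" using p j by auto
    moreover have "\<not> p < j"
    proof
      assume "p < j"
      then have "\<sigma>!p = \<sigma>!j" using before p by auto
      with \<open>p < j\<close> ds ls j(1) nth_eq_iff_index_eq show False by fastforce
    qed
    ultimately show ?thesis by auto
  qed
  have qj: "j < q"
  proof -
    have "q \<noteq> j" using q j by auto
    moreover have "\<not> q < j"
    proof
      assume "q < j"
      then have "\<pi>!q = \<pi>!j" using before q by auto
      with \<open>q < j\<close> dp lp j(1) nth_eq_iff_index_eq show False by fastforce
    qed
    ultimately show ?thesis by auto
  qed
  consider "j + 2 \<le> p" | "j + 2 \<le> q" | "p = Suc j" "q = Suc j" using pj qj by linarith
  then show ?thesis
  proof cases
    case 1
    show ?thesis by (rule sd_core[OF pi sg tk p(2)[symmetric] 1 p(1) T T' e0 ek])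
  next
    case 2
    show ?thesis by (rule sd_core[OF sg pi tk[symmetric] q(2)[symmetric] 2 q(1) T' T e0[symmetric] ek[symmetric]])
  next
    case 3
    have "j \<in> desc k \<pi> \<longleftrightarrow> \<pi>!j < \<sigma>!j" using 3 p q unfolding desc_def by auto
    moreover have "j \<in> desc k \<sigma> \<longleftrightarrow> \<sigma>!j < \<pi>!j" using 3 p q unfolding desc_def by auto
    ultimately show ?thesis using dd j(2) by auto
  qed
qed

lemma ramsey_SD:
  assumes big: "2^k * 4^n < (fact k :: nat)"
  shows "ramsey_prop (SD_carrier 1 2) SD_le (Q n) (\<subseteq>) (n+k)"
  unfolding ramsey_prop_def
proof (intro allI)
  fix c :: "nat set \<Rightarrow> bool"
  show "has_copy (SD_carrier 1 2) SD_le {A \<in> Q (n+k). c A} \<or> has_copy (Q n) (\<subseteq>) {A \<in> Q (n+k). \<not> c A}"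
  proof (rule disjCI)
    assume nc: "\<not> has_copy (Q n) (\<subseteq>) {A \<in> Q (n+k). \<not> c A}"
    define P where "P = permutations_of_set {..<k::nat}"
    have "\<forall>\<pi>\<in>P. \<exists>T. (\<forall>l<k. T l \<subseteq> T (Suc l)) \<and> (\<forall>l\<le>k. T l \<subseteq> {..<n} \<and> c (T l \<union> Yp n \<pi> l))"
    proof
      fix \<pi> assume "\<pi> \<in> P"
      then have "G c n \<pi> {..<n} k" using chain_lemma[OF nc] unfolding P_def by blast
      then show "\<exists>T. (\<forall>l<k. T l \<subseteq> T (Suc l)) \<and> (\<forall>l\<le>k. T l \<subseteq> {..<n} \<and> c (T l \<union> Yp n \<pi> l))"
        unfolding G_def by blast
    qed
    then obtain TT where TT: "\<And>\<pi>. \<pi> \<in> P \<Longrightarrow> (\<forall>l<k. TT \<pi> l \<subseteq> TT \<pi> (Suc l)) \<and> (\<forall>l\<le>k. TT \<pi> l \<subseteq> {..<n} \<and> c (TT \<pi> l \<union> Yp n \<pi> l))"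
      by metis
    define cl where "cl \<pi> = (desc k \<pi>, TT \<pi> 0, TT \<pi> k)" for \<pi>
    have img: "cl ` P \<subseteq> Pow {..<k} \<times> Pow {..<n} \<times> Pow {..<n}"
      using TT unfolding cl_def desc_def by fastforce
    have "\<not> inj_on cl P"
    proof
      assume "inj_on cl P"
      then have "card P \<le> card (Pow {..<k} \<times> Pow {..<n} \<times> Pow {..<n::nat})"
        using card_inj_on_le img by blast
      also have "\<dots> = 2^k * 4^n" by (simp add: card_Pow card_cartesian_product power_mult_distrib[symmetric])
      finally show False using big unfolding P_def by simp
    qed
    then obtain \<pi> \<sigma> where ps: "\<pi> \<in> P" "\<sigma> \<in> P" "\<pi> \<noteq> \<sigma>" "cl \<pi> = cl \<sigma>"
      unfolding inj_on_def by blast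
    show "has_copy (SD_carrier 1 2) SD_le {A \<in> Q (n+k). c A}"
      using sd_two[of \<pi> k \<sigma> "TT \<pi>" n c "TT \<sigma>"] ps TT[of \<pi>] TT[of \<sigma>] unfolding P_def cl_def by auto
  qed
qed



lemma t1: "((\<lambda>x::real. (ln (ln x) - d) / ln x) \<longlongrightarrow> 0) at_top"
  by real_asymp

lemma t2: "filterlim (\<lambda>x::real. x / log 2 x) at_top at_top"
  by real_asymp

lemma fact_bound: "real k ^ k \<le> exp (real k) * fact k"
proof (induction k)
  case 0 then show ?case by simp
next
  case (Suc k)
  have a: "(real k + 1) ^ k \<le> exp 1 * real k ^ k"
  proof (cases "k = 0")
    case True then show ?thesis by simp
  next
    case False
    then have kp: "real k > 0" by simp
    have "real k + 1 \<le> real k * exp (1 / real k)"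
      using exp_ge_add_one_self[of "1/real k"] kp by (simp add: field_simps)
    then have "(real k + 1) ^ k \<le> (real k * exp (1 / real k)) ^ k"
      by (rule power_mono) simp
    also have "\<dots> = real k ^ k * exp (1 / real k) ^ k" by (simp add: power_mult_distrib)
    also have "exp (1 / real k) ^ k = exp 1"
      using kp by (simp add: exp_of_nat_mult[symmetric])
    finally show ?thesis by (simp add: mult.commute)
  qed
  have "real (Suc k) ^ Suc k = (real k + 1) * (real k + 1) ^ k" by (simp add: add.commute)
  also have "\<dots> \<le> (real k + 1) * (exp 1 * real k ^ k)"
    using a by (intro mult_left_mono) auto
  also have "\<dots> \<le> (real k + 1) * (exp 1 * (exp (real k) * fact k))"
    using Suc.IH by (intro mult_left_mono) auto
  also have "\<dots> = exp (real (Suc k)) * fact (Suc k)"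
    by (simp add: exp_add[symmetric] algebra_simps)
  finally show ?case .
qed


lemma asymp_main:
  fixes \<epsilon> :: real assumes ep: "\<epsilon> > 0"
  shows "\<exists>n0. \<forall>n\<ge>n0. \<exists>k. 2^k * 4^n < (fact k :: nat) \<and>
           real (n + k) \<le> real n + (2 + \<epsilon>) * real n / log 2 (real n)"
proof -
  define c where "c = 2 + \<epsilon>/2"
  define \<eta> where "\<eta> = 1 - 2 / c"
  define d where "d = ln c + ln (ln 2) - ln 2 - 1"
  have c2: "c > 2" using ep unfolding c_def by simp
  have eta: "\<eta> > 0" using c2 unfolding \<eta>_def by (simp add: field_simps)
  have ev: "\<forall>\<^sub>F x in at_top. (ln (ln x) - d) / ln x < \<eta> \<and> 2 * exp 1 \<le> x / log 2 x
                \<and> 2 / \<epsilon> \<le> x / log 2 x \<and> 3 \<le> (x::real)"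
  proof -
    have e1: "\<forall>\<^sub>F x in at_top. (ln (ln x) - d) / ln x < \<eta>" using order_tendstoD(2)[OF t1[of d] eta] .
    have e2: "\<forall>\<^sub>F x in at_top. 2 * exp 1 \<le> x / log 2 x" using t2 unfolding filterlim_at_top by blast
    have e3: "\<forall>\<^sub>F x in at_top. 2 / \<epsilon> \<le> x / log 2 x" using t2 unfolding filterlim_at_top by blast
    show ?thesis by (intro eventually_conj e1 e2 e3 eventually_ge_at_top)
  qed
  have "\<forall>\<^sub>F n in sequentially. (ln (ln (real n)) - d) / ln (real n) < \<eta> \<and> 2 * exp 1 \<le> real n / log 2 (real n)
                \<and> 2 / \<epsilon> \<le> real n / log 2 (real n) \<and> 3 \<le> real n"
    using filterlim_real_sequentially[unfolded filterlim_iff] ev by blast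
  then obtain n0 where n0: "\<And>n. n \<ge> n0 \<Longrightarrow> (ln (ln (real n)) - d) / ln (real n) < \<eta> \<and> 2 * exp 1 \<le> real n / log 2 (real n)
                \<and> 2 / \<epsilon> \<le> real n / log 2 (real n) \<and> 3 \<le> real n"
    unfolding eventually_sequentially by blast
  show ?thesis
  proof (rule exI[of _ n0], intro allI impI)
    fix n assume "n \<ge> n0"
    note H = n0[OF this]
    define r where "r = real n"
    define L where "L = ln r"
    have r3: "r \<ge> 3" using H r_def by simp
    have L1: "L > 0" unfolding L_def using r3 by simp
    have lg: "log 2 r = L / ln 2" unfolding L_def log_def by simp
    have ln2: "ln (2::real) > 0" by simp
    define x where "x = c * r / log 2 r"
    have xeq: "x = c * r * ln 2 / L" unfolding x_def lg by simp
    have rl: "r / log 2 r \<ge> 2 * exp 1" "r / log 2 r \<ge> 2 / \<epsilon>" using H r_def by auto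
    have xge: "x \<ge> 2 * exp 1"
    proof -
      have "c * (r / log 2 r) \<ge> 1 * (r / log 2 r)" using c2 rl by (intro mult_right_mono) (auto intro: order_trans[OF _ rl(1)])
      then show ?thesis using rl unfolding x_def by simp
    qed
    have xpos: "x > 0" using xge by (smt (verit) exp_gt_zero)
    define k where "k = nat \<lceil>x\<rceil>"
    have kx: "real k \<ge> x" "real k < x + 1" unfolding k_def using xpos by linarith+
    have lnx: "ln (x / (2 * exp 1)) = L - ln L + d"
    proof -
      have "ln (x / (2 * exp 1)) = ln c + ln r + ln (ln 2) - ln L - ln 2 - 1"
        unfolding xeq using c2 r3 L1 ln2
        by (simp add: ln_div ln_mult)
      then show ?thesis unfolding d_def L_def by simp
    qed
    have etaL: "(ln L - d) / L < \<eta>" using H unfolding L_def r_def by simp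
    have "x * ln (x / (2 * exp 1)) = x * (L - ln L + d)" using lnx by simp
    also have "\<dots> = c * r * ln 2 * (1 - (ln L - d) / L)"
      unfolding xeq using L1 by (simp add: field_simps)
    also have "\<dots> > c * r * ln 2 * (1 - \<eta>)"
      using etaL c2 r3 ln2 by (intro mult_strict_left_mono) auto
    also have "c * r * ln 2 * (1 - \<eta>) = r * ln 4"
    proof -
      have "ln (4::real) = 2 * ln 2" using ln_realpow[of 2 2] by simp
      then show ?thesis unfolding \<eta>_def using c2 by (simp add: field_simps)
    qed
    finally have A1: "r * ln 4 < x * ln (x / (2 * exp 1))" .
    have A2: "x * ln (x / (2 * exp 1)) \<le> real k * ln (real k / (2 * exp 1))"
    proof (rule mult_mono)
      show "ln (x / (2 * exp 1)) \<le> ln (real k / (2 * exp 1))"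
        using kx xpos by (simp add: divide_right_mono)
      show "0 \<le> ln (x / (2 * exp 1))" using xge by simp
    qed (use kx xpos in auto)
    have kpos: "real k > 0" using kx xpos by simp
    have "real (4^n) = exp (r * ln 4)" unfolding r_def
      by (simp add: exp_of_nat_mult)
    also have "\<dots> < exp (real k * ln (real k / (2 * exp 1)))" using A1 A2 by simp
    also have "\<dots> = (real k / (2 * exp 1)) ^ k"
      using kpos by (simp add: exp_of_nat_mult)
    finally have A3: "real (4^n) < (real k / (2 * exp 1)) ^ k" .
    have "real (2^k * 4^n) = 2^k * real (4^n)" by simp
    also have "\<dots> < 2^k * (real k / (2 * exp 1)) ^ k" using A3 by simp
    also have "\<dots> = real k ^ k / exp (real k)"
      by (simp add: power_divide power_mult_distrib exp_of_nat_mult[symmetric])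
    also have "\<dots> \<le> fact k" using fact_bound[of k] by (simp add: divide_le_eq mult.commute)
    finally have "real (2^k * 4^n) < fact k" .
    then have partA: "2^k * 4^n < (fact k :: nat)" by (metis of_nat_fact of_nat_less_iff)
    have "1 \<le> \<epsilon> / 2 * (r / log 2 r)" using rl ep by (simp add: field_simps)
    then have "real (n + k) \<le> r + x + \<epsilon> / 2 * (r / log 2 r)" using kx unfolding r_def by simp
    also have "\<dots> = real n + (2 + \<epsilon>) * real n / log 2 (real n)"
    proof -
      have "log 2 r > 0" using lg L1 by simp
      then have "r + x + \<epsilon> / 2 * (r / log 2 r) = r + (2 + \<epsilon>) * r / log 2 r"
        unfolding x_def c_def by (simp add: field_simps)
      then show ?thesis unfolding r_def .
    qed
    finally have partB: "real (n + k) \<le> real n + (2 + \<epsilon>) * real n / log 2 (real n)" .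
    show "\<exists>k. 2^k * 4^n < (fact k :: nat) \<and> real (n + k) \<le> real n + (2 + \<epsilon>) * real n / log 2 (real n)"
      using partA partB by blast
  qed
qed


lemma J_from_SD:
  assumes "has_copy (SD_carrier 1 2) SD_le S"
  shows "has_copy J_carrier J_le S"
proof -
  obtain f where f: "inj_on f (SD_carrier 1 2)" "f ` SD_carrier 1 2 \<subseteq> S"
    "\<forall>x\<in>SD_carrier 1 2. \<forall>y\<in>SD_carrier 1 2. SD_le x y \<longleftrightarrow> f x \<subseteq> f y"
    using assms unfolding has_copy_def by blast
  define g where "g i = (if i = (0::nat) then SL 0 else if i = 1 then SBot else if i = 2 then SR 0 else SR 1)" for i
  have car: "SD_carrier 1 2 = {SBot, STop, SL 0, SR 0, SR 1}"
    unfolding SD_carrier_def by (auto simp: lessThan_Suc)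
  have gJ: "g ` J_carrier \<subseteq> SD_carrier 1 2" unfolding car g_def J_carrier_def by auto
  have ginj: "inj_on g J_carrier" unfolding inj_on_def g_def J_carrier_def by auto
  have gle: "J_le x y \<longleftrightarrow> SD_le (g x) (g y)" if "x \<in> J_carrier" "y \<in> J_carrier" for x y
    using that unfolding J_carrier_def J_le_def g_def by auto
  show ?thesis unfolding has_copy_def
  proof (intro exI[of _ "f \<circ> g"] conjI)
    show "inj_on (f \<circ> g) J_carrier" using comp_inj_on[OF ginj] f(1) gJ inj_on_subset by blast
    show "(f \<circ> g) ` J_carrier \<subseteq> S" using gJ f(2) by auto
    show "\<forall>x\<in>J_carrier. \<forall>y\<in>J_carrier. J_le x y = ((f \<circ> g) x \<subseteq> (f \<circ> g) y)"
    proof (intro ballI)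
      fix x y assume xy: "x \<in> J_carrier" "y \<in> J_carrier"
      then have "g x \<in> SD_carrier 1 2" "g y \<in> SD_carrier 1 2" using gJ by auto
      then show "J_le x y = ((f \<circ> g) x \<subseteq> (f \<circ> g) y)" using gle[OF xy] f(3) by simp
    qed
  qed
qed

lemma ramsey_J_from_SD:
  "ramsey_prop (SD_carrier 1 2) SD_le (Q n) (\<subseteq>) N \<Longrightarrow> ramsey_prop J_carrier J_le (Q n) (\<subseteq>) N"
  unfolding ramsey_prop_def using J_from_SD by blast

theorem corollary4:
  fixes \<epsilon> :: real
  assumes "\<epsilon> > 0"
  shows "\<exists>n0. \<forall>n \<ge> n0.
           (\<exists>N. ramsey_prop J_carrier J_le (Q n) (\<subseteq>) N) \<and>
           (\<exists>N. ramsey_prop (SD_carrier 1 2) SD_le (Q n) (\<subseteq>) N) \<and>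
           poset_ramsey J_carrier J_le (Q n) (\<subseteq>)
             \<le> poset_ramsey (SD_carrier 1 2) SD_le (Q n) (\<subseteq>) \<and>
           real (poset_ramsey (SD_carrier 1 2) SD_le (Q n) (\<subseteq>))
             \<le> real n + (2 + \<epsilon>) * real n / log 2 (real n)"
proof -
  obtain n0 where n0: "\<And>n. n \<ge> n0 \<Longrightarrow> \<exists>k. 2^k * 4^n < (fact k :: nat) \<and>
           real (n + k) \<le> real n + (2 + \<epsilon>) * real n / log 2 (real n)"
    using asymp_main[OF assms] by blast
  show ?thesis
  proof (rule exI[of _ n0], intro allI impI)
    fix n assume "n \<ge> n0"
    then obtain k where k: "2^k * 4^n < (fact k :: nat)"
      "real (n + k) \<le> real n + (2 + \<epsilon>) * real n / log 2 (real n)" using n0 by blast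
    have RS: "ramsey_prop (SD_carrier 1 2) SD_le (Q n) (\<subseteq>) (n+k)" using ramsey_SD[OF k(1)] .
    have RJ: "ramsey_prop J_carrier J_le (Q n) (\<subseteq>) (n+k)" using ramsey_J_from_SD[OF RS] .
    have le1: "poset_ramsey (SD_carrier 1 2) SD_le (Q n) (\<subseteq>) \<le> n + k"
      unfolding poset_ramsey_def using RS by (rule Least_le)
    have SDL: "ramsey_prop (SD_carrier 1 2) SD_le (Q n) (\<subseteq>) (poset_ramsey (SD_carrier 1 2) SD_le (Q n) (\<subseteq>))"
      unfolding poset_ramsey_def using RS by (rule LeastI)
    have le2: "poset_ramsey J_carrier J_le (Q n) (\<subseteq>) \<le> poset_ramsey (SD_carrier 1 2) SD_le (Q n) (\<subseteq>)"
      unfolding poset_ramsey_def[of J_carrier] using ramsey_J_from_SD[OF SDL] by (rule Least_le)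
    have "real (poset_ramsey (SD_carrier 1 2) SD_le (Q n) (\<subseteq>)) \<le> real (n + k)"
      using le1 by linarith
    with k(2) le2 RS RJ show "(\<exists>N. ramsey_prop J_carrier J_le (Q n) (\<subseteq>) N) \<and>
           (\<exists>N. ramsey_prop (SD_carrier 1 2) SD_le (Q n) (\<subseteq>) N) \<and>
           poset_ramsey J_carrier J_le (Q n) (\<subseteq>)
             \<le> poset_ramsey (SD_carrier 1 2) SD_le (Q n) (\<subseteq>) \<and>
           real (poset_ramsey (SD_carrier 1 2) SD_le (Q n) (\<subseteq>))
             \<le> real n + (2 + \<epsilon>) * real n / log 2 (real n)" by auto
  qed
qed

end
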